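(* Let $q(m,n)=am^2+bmn+cn^2$ with $a,b,c\in\mathbb{Z}$ be a positive definite form ($\Delta=b^2-4ac<0$, $a>0$) and let $\lambda>0$. For $k\in\mathbb{Z}$ let $A_k=\{(m,n)\in(\mathbb{Z}\setminus\{0\})\times\mathbb{Z}: q(m,n)=k\}$. Then there is a constant $C_{\lambda,\Delta}$ depending only on $\lambda$ and $\Delta$ such that for every $k\in\mathbb{Z}$, $$\sum_{(m,n)\in A_k}\frac{1}{|m|^{\lambda}}\le C_{\lambda,\Delta}.$$ *)

theory Defs
  imports Complex_Main
begin

definition qform :: "int \<Rightarrow> int \<Rightarrow> int \<Rightarrow> int \<Rightarrow> int \<Rightarrow> int" where
  "qform a b c m n = a * m^2 + b * m * n + c * n^2"

definition repset :: "int \<Rightarrow> int \<Rightarrow> int \<Rightarrow> int \<Rightarrow> (int \<times> int) set" where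
  "repset a b c k = {(m, n). m \<noteq> 0 \<and> qform a b c m n = k}"

end

theory Submission
  imports Defs "HOL-Computational_Algebra.Primes"
begin


lemma dcount_pp:
  assumes "prime (p::nat)"
  shows "card {d. d dvd p^e} = Suc e"
proof -
  have "{d. d dvd p^e} = (\<lambda>i. p^i) ` {..e}"
    using divides_primepow_nat[OF assms] by auto
  moreover have "inj_on (\<lambda>i. p^i) {..e}"
    using assms prime_gt_1_nat by (auto intro!: inj_onI simp: power_inject_exp)
  ultimately show ?thesis by (simp add: card_image)
qed

lemma dcount_mult:
  assumes "(a::nat) > 0" "b > 0"
  shows "card {d. d dvd a*b} \<le> card {d. d dvd a} * card {d. d dvd b}"
proof -
  have "{d. d dvd a*b} \<subseteq> (\<lambda>(x,y). x*y) ` ({d. d dvd a} \<times> {d. d dvd b})"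
  proof
    fix d assume "d \<in> {d. d dvd a*b}"
    then obtain x y where "d = x*y" "x dvd a" "y dvd b" by (auto elim: dvd_productE)
    then show "d \<in> (\<lambda>(x,y). x*y) ` ({d. d dvd a} \<times> {d. d dvd b})" by force
  qed
  hence "card {d. d dvd a*b} \<le> card ((\<lambda>(x,y). x*y) ` ({d. d dvd a} \<times> {d. d dvd b}))"
    by (intro card_mono) (use assms in auto)
  also have "\<dots> \<le> card ({d. d dvd a} \<times> {d. d dvd b})" by (rule card_image_le) (use assms in auto)
  finally show ?thesis by (simp add: card_cartesian_product)
qed

lemma exp_factor_bound:
  fixes eps :: real assumes "eps > 0"
  shows "real (Suc e) \<le> (1 + 1/(eps * ln 2)) * 2 powr (real e * eps)"
proof -
  define a where "a = eps * ln 2"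
  have a: "a > 0" using assms by (simp add: a_def)
  have "2 powr (real e * eps) = exp (real e * a)" by (simp add: powr_def a_def algebra_simps)
  also have "\<dots> \<ge> 1 + real e * a" by (rule exp_ge_add_one_self)
  finally have h: "2 powr (real e * eps) \<ge> 1 + real e * a" .
  have "(1 + 1/a) * (1 + real e * a) = 1 + real e * a + 1/a + real e" using a by (simp add: field_simps)
  also have "\<dots> \<ge> real (Suc e)" using a by simp
  finally have "real (Suc e) \<le> (1 + 1/a) * (1 + real e * a)" .
  also have "\<dots> \<le> (1 + 1/a) * 2 powr (real e * eps)" using h a by (intro mult_left_mono) auto
  finally show ?thesis by (simp add: a_def)
qed

lemma divisor_bound_aux:
  fixes eps B :: real and P :: nat
  assumes eps: "eps > 0" and B: "B = 1 + 1/(eps * ln 2)"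
    and P: "\<And>p. p \<ge> P \<Longrightarrow> p > 0 \<Longrightarrow> real p powr eps \<ge> 2"
  shows "n > 0 \<Longrightarrow> real (card {d. d dvd n}) \<le> B ^ card {p \<in> prime_factors n. p < P} * real n powr eps"
proof (induction n rule: less_induct)
  case (less n)
  have B1: "B \<ge> 1" using B eps by simp
  show ?case
  proof (cases "n = 1")
    case True then show ?thesis by simp
  next
    case False
    then obtain p where p: "prime p" "p dvd n" using less.prems
      by (metis prime_factor_nat)
    define e where "e = multiplicity p n"
    obtain m where nm: "n = p^e * m" and pm: "\<not> p dvd m"
      using multiplicity_decompose'[of n p] e_def less.prems p prime_gt_1_nat by (metis less_not_refl2 nat_dvd_1_iff_1 neq0_conv)
    have e1: "e \<ge> 1" using p less.prems by (simp add: e_def prime_multiplicity_gt_zero_iff Suc_le_eq)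
    have m0: "m > 0" using nm less.prems by (cases "m = 0") auto
    have p1: "p > 1" using p prime_gt_1_nat by auto
    have "p^e > 1" using p1 e1 by (metis One_nat_def less_le_trans not_one_le_zero one_less_power neq0_conv)
    hence mn: "m < n" using nm m0 by simp
    have IH: "real (card {d. d dvd m}) \<le> B ^ card {p \<in> prime_factors m. p < P} * real m powr eps"
      using less.IH[OF mn m0] .
    have dn: "real (card {d. d dvd n}) \<le> real (Suc e) * real (card {d. d dvd m})"
      using dcount_mult[of "p^e" m] dcount_pp[OF p(1), of e] m0 p1 nm
      by (metis of_nat_le_iff of_nat_mult zero_less_power less_trans zero_less_one)
    have pfm: "prime_factors m \<subseteq> prime_factors n - {p}"
      using nm pm m0 less.prems by (auto simp: prime_factors_dvd dvd_mult_right)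
    have fin: "finite {q \<in> prime_factors n. q < P}" by simp
    have npow: "real n powr eps = real p powr (real e * eps) * real m powr eps"
      using nm p1 m0 by (simp add: powr_mult powr_realpow[symmetric] powr_powr mult.commute)
    have pe2: "real p powr (real e * eps) \<ge> 2 powr (real e * eps)"
      using p1 eps by (intro powr_mono2) auto
    have ef: "real (Suc e) \<le> B * real p powr (real e * eps)"
      using exp_factor_bound[OF eps, of e] pe2 B B1 by (smt (verit) mult_left_mono)
    show ?thesis
    proof (cases "p < P")
      case True
      have "{q \<in> prime_factors m. q < P} \<subseteq> {q \<in> prime_factors n. q < P} - {p}" using pfm by auto
      hence "card {q \<in> prime_factors m. q < P} \<le> card ({q \<in> prime_factors n. q < P} - {p})"
        by (intro card_mono) auto
      also have "\<dots> = card {q \<in> prime_factors n. q < P} - 1"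
        using True p less.prems by (subst card_Diff_singleton) (auto simp: prime_factors_dvd)
      finally have cc: "Suc (card {q \<in> prime_factors m. q < P}) \<le> card {q \<in> prime_factors n. q < P}"
        using True p less.prems
        by (metis (mono_tags, lifting) Suc_pred' card_gt_0_iff empty_iff fin in_prime_factors_iff mem_Collect_eq not_gr0 not_less_eq_eq)
      have "real (card {d. d dvd n}) \<le> (B * real p powr (real e * eps)) * (B ^ card {p \<in> prime_factors m. p < P} * real m powr eps)"
        using dn IH ef by (meson mult_mono of_nat_0_le_iff order.trans zero_le_mult_iff B1 powr_ge_zero)
      also have "\<dots> = B ^ Suc (card {p \<in> prime_factors m. p < P}) * real n powr eps"
        by (simp add: npow)
      also have "\<dots> \<le> B ^ card {p \<in> prime_factors n. p < P} * real n powr eps"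
        using cc B1 by (intro mult_right_mono power_increasing) auto
      finally show ?thesis .
    next
      case False
      have pP: "real p powr eps \<ge> 2" using P[of p] False p1 by auto
      have "real (Suc e) \<le> 2 ^ e" by (induction e) auto
      also have "(2::real) ^ e \<le> (real p powr eps) ^ e" using pP by (intro power_mono) auto
      also have "\<dots> = real p powr (real e * eps)" using p1 by (simp add: powr_powr[symmetric] powr_realpow mult.commute)
      finally have ef2: "real (Suc e) \<le> real p powr (real e * eps)" .
      have "{q \<in> prime_factors m. q < P} \<subseteq> {q \<in> prime_factors n. q < P}" using pfm by auto
      hence cc: "card {q \<in> prime_factors m. q < P} \<le> card {q \<in> prime_factors n. q < P}"
        by (intro card_mono) auto
      have "real (card {d. d dvd n}) \<le> (real p powr (real e * eps)) * (B ^ card {p \<in> prime_factors m. p < P} * real m powr eps)"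
        using dn IH ef2 by (meson mult_mono of_nat_0_le_iff order.trans zero_le_mult_iff B1 powr_ge_zero)
      also have "\<dots> = B ^ (card {p \<in> prime_factors m. p < P}) * real n powr eps"
        by (simp add: npow)
      also have "\<dots> \<le> B ^ card {p \<in> prime_factors n. p < P} * real n powr eps"
        using cc B1 by (intro mult_right_mono power_increasing) auto
      finally show ?thesis .
    qed
  qed
qed

lemma divisor_bound:
  fixes eps :: real assumes eps: "eps > 0"
  shows "\<exists>C. C \<ge> 1 \<and> (\<forall>n::nat. n > 0 \<longrightarrow> real (card {d. d dvd n}) \<le> C * real n powr eps)"
proof -
  define B where "B = 1 + 1/(eps * ln 2)"
  define P where "P = nat \<lceil>2 powr (1/eps)\<rceil>"
  have B1: "B \<ge> 1" using eps by (simp add: B_def)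
  have P: "real p powr eps \<ge> 2" if "p \<ge> P" "p > 0" for p
  proof -
    have "real p \<ge> 2 powr (1/eps)" using that(1) unfolding P_def by linarith
    hence "real p powr eps \<ge> (2 powr (1/eps)) powr eps" using eps by (intro powr_mono2) auto
    also have "(2 powr (1/eps)) powr eps = 2" using eps by (simp add: powr_powr)
    finally show ?thesis .
  qed
  show ?thesis
  proof (intro exI[of _ "B ^ P"] conjI allI impI)
    show "1 \<le> B ^ P" using B1 by simp
    fix n :: nat assume n: "n > 0"
    have "real (card {d. d dvd n}) \<le> B ^ card {p \<in> prime_factors n. p < P} * real n powr eps"
      by (rule divisor_bound_aux[OF eps B_def P n]) auto
    also have "card {p \<in> prime_factors n. p < P} \<le> P"
      using card_mono[of "{..<P}" "{p \<in> prime_factors n. p < P}"] by auto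
    hence "B ^ card {p \<in> prime_factors n. p < P} \<le> B ^ P" using B1 by (intro power_increasing) auto
    hence "B ^ card {p \<in> prime_factors n. p < P} * real n powr eps \<le> B ^ P * real n powr eps"
      by (intro mult_right_mono) auto
    finally show "real (card {d. d dvd n}) \<le> B ^ P * real n powr eps" .
  qed
qed

lemma int_divisors_card:
  assumes "(N::int) > 0"
  shows "card {d::int. d > 0 \<and> d dvd N} = card {d::nat. d dvd nat N}"
proof -
  have "{d::int. d > 0 \<and> d dvd N} = int ` {d::nat. d dvd nat N}"
  proof (intro equalityI subsetI)
    fix d :: int assume "d \<in> {d::int. d > 0 \<and> d dvd N}"
    hence "d > 0" "d dvd N" by auto
    hence "nat d dvd nat N" using assms by (simp add: nat_dvd_iff)
    moreover have "d = int (nat d)" using \<open>d > 0\<close> by simp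
    ultimately show "d \<in> int ` {d::nat. d dvd nat N}" by blast
  next
    fix d assume "d \<in> int ` {d::nat. d dvd nat N}"
    then obtain e where "d = int e" "e dvd nat N" by auto
    moreover have "e > 0" using \<open>e dvd nat N\<close> assms by (cases "e = 0") auto
    moreover have "int e dvd N" using \<open>e dvd nat N\<close> assms
      by (metis int_nat_eq less_imp_le of_nat_dvd_iff)
    ultimately show "d \<in> {d::int. d > 0 \<and> d dvd N}" by simp
  qed
  thus ?thesis by (simp add: card_image)
qed

lemma int_divisor_bound:
  fixes eps :: real assumes eps: "eps > 0"
  shows "\<exists>C. C \<ge> 1 \<and> (\<forall>N::int. N > 0 \<longrightarrow> real (card {d::int. d > 0 \<and> d dvd N}) \<le> C * real_of_int N powr eps)"
proof -
  obtain C where C: "C \<ge> 1" "\<And>n::nat. n > 0 \<Longrightarrow> real (card {d. d dvd n}) \<le> C * real n powr eps"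
    using divisor_bound[OF eps] by blast
  show ?thesis
  proof (rule exI[of _ C], intro conjI allI impI)
    fix N :: int assume N: "N > 0"
    have "real (card {d. d dvd nat N}) \<le> C * real (nat N) powr eps" using C(2)[of "nat N"] N by simp
    thus "real (card {d::int. d > 0 \<and> d dvd N}) \<le> C * real_of_int N powr eps"
      using N by (simp add: int_divisors_card)
  qed (use C in auto)
qed




lemma dvd_div_gcd_mult:
  fixes M x y :: int
  assumes "M dvd x * y" "M > 0"
  shows "M div gcd x M dvd y"
proof -
  define g where "g = gcd x M"
  have g0: "g > 0" using assms by (simp add: g_def)
  obtain x' where x': "x = g * x'" unfolding g_def by (meson dvd_def gcd_dvd1)
  obtain M' where M': "M = g * M'" unfolding g_def by (meson dvd_def gcd_dvd2)
  have xg: "x div g = x'" and Mg: "M div g = M'" using x' M' g0 by simp_all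
  hence cop: "coprime x' M'"
    using div_gcd_coprime[of x M] g0 unfolding g_def by auto
  have "g * M' dvd g * (x' * y)" using assms(1) x' M' by (simp add: mult.assoc)
  hence "M' dvd x' * y" using g0 by simp
  hence "M' dvd y" using coprime_dvd_mult_right_iff[of M' x' y] cop by (simp add: coprime_commute)
  thus ?thesis using Mg by (simp add: g_def)
qed

lemma card_residue_class:
  fixes L M r :: int
  assumes "L > 0" "L dvd M"
  shows "card {s. 0 \<le> s \<and> s < M \<and> s mod L = r} \<le> nat (M div L)"
proof -
  have "inj_on (\<lambda>s. s div L) {s. 0 \<le> s \<and> s < M \<and> s mod L = r}"
  proof (rule inj_onI)
    fix s t assume "s \<in> {s. 0 \<le> s \<and> s < M \<and> s mod L = r}" "t \<in> {s. 0 \<le> s \<and> s < M \<and> s mod L = r}"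
      "s div L = t div L"
    thus "s = t" by (metis (mono_tags) mem_Collect_eq mult_div_mod_eq)
  qed
  moreover have "(\<lambda>s. s div L) ` {s. 0 \<le> s \<and> s < M \<and> s mod L = r} \<subseteq> {0..<M div L}"
  proof
    fix u assume "u \<in> (\<lambda>s. s div L) ` {s. 0 \<le> s \<and> s < M \<and> s mod L = r}"
    then obtain s where s: "0 \<le> s" "s < M" "u = s div L" by auto
    obtain K where K: "M = L * K" using assms(2) by auto
    have e1: "L * (s div L) + s mod L = s" by (rule mult_div_mod_eq)
    have "s mod L \<ge> 0" using assms(1) by simp
    hence "L * (s div L) < L * K" using e1 s K by linarith
    hence "s div L < K" using assms(1) by (simp add: mult_less_cancel_left_pos)
    thus "u \<in> {0..<M div L}" using s K assms(1) by (simp add: pos_imp_zdiv_nonneg_iff)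
  qed
  ultimately have "card {s. 0 \<le> s \<and> s < M \<and> s mod L = r} \<le> card {0..<M div L}"
    by (metis card_image card_mono finite_atLeastLessThan_int)
  thus ?thesis by simp
qed

definition Rt :: "int \<Rightarrow> int \<Rightarrow> int set" where
  "Rt D M = {s. 0 \<le> s \<and> s < M \<and> M dvd s^2 + D}"

lemma roots_bound:
  fixes D M :: int
  assumes D: "D > 0" and M: "M > 0"
  shows "int (card (Rt D M)) \<le> 4 * D * int (card {d. d > 0 \<and> d dvd M})"
proof (cases "Rt D M = {}")
  case True then show ?thesis using D by simp
next
  case False
  then obtain s0 where s0: "s0 \<in> Rt D M" by auto
  define Dv where "Dv = {d::int. d > 0 \<and> d dvd M}"
  have finDv: "finite Dv" unfolding Dv_def
    by (rule finite_subset[of _ "{0..M}"]) (use M in \<open>auto simp: zdvd_imp_le\<close>)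
  define F where "F d = {s \<in> Rt D M. gcd (s - s0) M = d}" for d
  have cover: "Rt D M \<subseteq> (\<Union>d\<in>Dv. F d)"
    unfolding F_def Dv_def using M by auto
  have key: "d dvd s - s0 \<and> M div d dvd s + s0" if "s \<in> F d" for s d
  proof -
    have "M dvd (s^2 + D) - (s0^2 + D)" using that s0 unfolding F_def Rt_def by (intro dvd_diff) auto
    hence "M dvd (s - s0) * (s + s0)" by (simp add: power2_eq_square algebra_simps)
    hence "M div gcd (s - s0) M dvd s + s0" using dvd_div_gcd_mult M by blast
    thus ?thesis using that unfolding F_def by auto
  qed
  have fib: "card (F d) \<le> nat (4 * D)" if d: "d \<in> Dv" for d
  proof (cases "F d = {}")
    case True then show ?thesis by simp
  next
    case False
    then obtain s1 where s1: "s1 \<in> F d" by auto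
    have d0: "d > 0" "d dvd M" using d unfolding Dv_def by auto
    define L where "L = lcm d (M div d)"
    have L0: "L > 0" using d0 M unfolding L_def
      by (metis dvd_div_eq_0_iff lcm_eq_0_iff lcm_pos_int linorder_neqE_linordered_idom not_less_iff_gr_or_eq zero_less_iff_neq_zero) 
    have Md: "M div d * d = M" using d0 by simp
    have Mdpos: "M div d > 0" using d0 M by (simp add: pos_imp_zdiv_pos_iff zdvd_imp_le)
    have gl: "gcd d (M div d) * L = M" unfolding L_def using d0 Mdpos Md by (simp add: mult.commute)
    have LM: "L dvd M" using gl by (metis dvd_triv_right)
    have sub: "F d \<subseteq> {s. 0 \<le> s \<and> s < M \<and> s mod L = s1 mod L}"
    proof
      fix s assume s: "s \<in> F d"
      have "d dvd (s - s0) - (s1 - s0)" by (rule dvd_diff) (use key[OF s] key[OF s1] in auto)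
      hence "d dvd s - s1" by simp
      moreover have "M div d dvd (s + s0) - (s1 + s0)" by (rule dvd_diff) (use key[OF s] key[OF s1] in auto)
      hence "M div d dvd s - s1" by simp
      ultimately have "L dvd s - s1" unfolding L_def by (rule lcm_least)
      hence "s mod L = s1 mod L" by (simp add: mod_eq_dvd_iff)
      thus "s \<in> {s. 0 \<le> s \<and> s < M \<and> s mod L = s1 mod L}" using s unfolding F_def Rt_def by auto
    qed
    have "card (F d) \<le> card {s. 0 \<le> s \<and> s < M \<and> s mod L = s1 mod L}"
      by (rule card_mono[OF _ sub]) (rule finite_subset[of _ "{0..<M}"], auto)
    also have "\<dots> \<le> nat (M div L)" by (rule card_residue_class[OF L0 LM])
    also have "M div L = gcd d (M div d)" using gl L0 by (metis nonzero_mult_div_cancel_right less_irrefl)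
    also have "gcd d (M div d) \<le> 4 * D"
    proof -
      define e where "e = gcd d (M div d)"
      have "e dvd s1 - s0" "e dvd s1 + s0" using key[OF s1] unfolding e_def by (meson dvd_trans gcd_dvd1 gcd_dvd2)+
      hence "e dvd (s1 - s0) + (s1 + s0)" by (rule dvd_add)
      hence "e dvd 2 * s1" by simp
      moreover have "e dvd s1^2 + D"
      proof -
        have "e dvd d" unfolding e_def by simp
        moreover have "M dvd s1^2 + D" using s1 unfolding F_def Rt_def by auto
        ultimately show ?thesis using d0(2) dvd_trans by blast
      qed
      ultimately have h1: "e dvd 4 * (s1^2 + D)" and h2: "e dvd (2*s1) * (2*s1)"
        by (meson dvd_mult)+
      have "e dvd 4 * (s1^2 + D) - (2*s1) * (2*s1)" by (rule dvd_diff[OF h1 h2])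
      hence "e dvd 4 * D" by (simp add: power2_eq_square algebra_simps)
      moreover have "e > 0" unfolding e_def using d0 by simp
      ultimately show ?thesis unfolding e_def using D by (simp add: zdvd_imp_le)
    qed
    finally show ?thesis by simp
  qed
  have "card (Rt D M) \<le> card (\<Union>d\<in>Dv. F d)"
  proof (rule card_mono[OF _ cover])
    have "F d \<subseteq> {0..<M}" for d unfolding F_def Rt_def by auto
    hence "finite (F d)" for d by (meson finite_atLeastLessThan_int finite_subset)
    thus "finite (\<Union>d\<in>Dv. F d)" using finDv by blast
  qed
  also have "\<dots> \<le> (\<Sum>d\<in>Dv. card (F d))" by (rule card_UN_le[OF finDv])
  also have "\<dots> \<le> (\<Sum>d\<in>Dv. nat (4 * D))" by (rule sum_mono) (rule fib)
  also have "\<dots> = card Dv * nat (4 * D)" by simp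
  finally have "int (card (Rt D M)) \<le> int (card Dv * nat (4 * D))" by linarith
  thus ?thesis using D by (simp add: Dv_def mult.commute)
qed




definition Prim :: "int \<Rightarrow> int \<Rightarrow> (int \<times> int) set" where
  "Prim D M = {(m,Y). D*m^2 + Y^2 = M \<and> coprime m Y}"

lemma abs_le_sq_int: "\<bar>x::int\<bar> \<le> x^2"
proof (cases "x = 0")
  case False
  hence "1 \<le> \<bar>x\<bar>" by simp
  hence "\<bar>x\<bar> * 1 \<le> \<bar>x\<bar> * \<bar>x\<bar>" by (intro mult_left_mono) auto
  thus ?thesis by (simp add: power2_eq_square abs_mult_self_eq)
qed simp

lemma pm_lemma:
  fixes m1 Y1 m2 Y2 :: int
  assumes c1: "coprime m1 Y1" and c2: "coprime m2 Y2" and e: "m1 * Y2 = m2 * Y1"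
  shows "(m2, Y2) = (m1, Y1) \<or> (m2, Y2) = (-m1, -Y1)"
proof -
  have "m1 dvd m2 * Y1" unfolding e[symmetric] by simp
  hence a1: "m1 dvd m2" using c1 by (simp add: coprime_dvd_mult_left_iff)
  have "m2 dvd m1 * Y2" by (simp add: e)
  hence a2: "m2 dvd m1" using c2 by (simp add: coprime_dvd_mult_left_iff)
  have "Y1 dvd m1 * Y2" by (simp add: e)
  hence b1: "Y1 dvd Y2" using c1 by (simp add: coprime_commute coprime_dvd_mult_right_iff)
  have "Y2 dvd m2 * Y1" unfolding e[symmetric] by simp
  hence b2: "Y2 dvd Y1" using c2 by (simp add: coprime_commute coprime_dvd_mult_right_iff)
  have am: "\<bar>m1\<bar> = \<bar>m2\<bar>" using a1 a2 by (rule zdvd_antisym_abs)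
  have aY: "\<bar>Y1\<bar> = \<bar>Y2\<bar>" using b1 b2 by (rule zdvd_antisym_abs)
  show ?thesis
  proof (cases "m1 = 0")
    case True
    then have "m2 = 0" using am by simp
    moreover have "Y2 = Y1 \<or> Y2 = -Y1" using aY by arith
    ultimately show ?thesis using True by auto
  next
    case False
    from am have "m2 = m1 \<or> m2 = -m1" by arith
    then show ?thesis
    proof
      assume "m2 = m1" then show ?thesis using e False by simp
    next
      assume m2: "m2 = -m1"
      hence "m1 * (Y2 + Y1) = 0" using e by (simp add: algebra_simps)
      hence "Y2 + Y1 = 0" using False by simp
      hence "Y2 = -Y1" by simp
      then show ?thesis using m2 by simp
    qed
  qed
qed

lemma prim_finite:
  assumes "D \<ge> 1" shows "finite (Prim D M)"
proof (rule finite_subset)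
  show "Prim D M \<subseteq> {-\<bar>M\<bar>..\<bar>M\<bar>} \<times> {-\<bar>M\<bar>..\<bar>M\<bar>}"
  proof
    fix p assume "p \<in> Prim D M"
    then obtain m Y where p: "p = (m,Y)" "D*m^2 + Y^2 = M" unfolding Prim_def by auto
    have "m^2 \<le> D*m^2" using assms by (simp add: mult_le_cancel_right1)
    moreover have "Y^2 \<ge> 0" by simp
    ultimately have "m^2 \<le> M" using p by linarith
    hence "\<bar>m\<bar> \<le> \<bar>M\<bar>" using abs_le_sq_int[of m] by linarith
    moreover have "D*m^2 \<ge> 0" using assms by simp
    hence "Y^2 \<le> M" using p by linarith
    hence "\<bar>Y\<bar> \<le> \<bar>M\<bar>" using abs_le_sq_int[of Y] by linarith
    ultimately show "p \<in> {-\<bar>M\<bar>..\<bar>M\<bar>} \<times> {-\<bar>M\<bar>..\<bar>M\<bar>}" using p by auto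
  qed
qed auto

lemma prim_bound:
  fixes D M :: int
  assumes D: "D \<ge> 2" and M: "M > 0"
  shows "card (Prim D M) \<le> 2 * card (Rt D M)"
proof -
  define G where "G s = {(m,Y) \<in> Prim D M. M dvd Y - s*m}" for s
  have finRt: "finite (Rt D M)" unfolding Rt_def
    by (rule finite_subset[of _ "{0..<M}"]) auto
  have cover: "Prim D M \<subseteq> (\<Union>s\<in>Rt D M. G s)"
  proof
    fix p assume p: "p \<in> Prim D M"
    then obtain m Y where pm: "p = (m,Y)" and eq: "D*m^2 + Y^2 = M" and cop: "coprime m Y"
      unfolding Prim_def by auto
    have "coprime m (Y^2)" using cop by simp
    have Meq: "M = (D*m)*m + Y^2" using eq by (simp add: power2_eq_square algebra_simps)
    have "gcd m M = gcd m (Y^2)" by (simp only: Meq gcd_add_mult)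
    hence copM: "coprime m M" using \<open>coprime m (Y^2)\<close> by (simp add: coprime_iff_gcd_eq_1)
    obtain u v where uv: "u * m + v * M = 1" using bezout_int[of m M] copM by auto
    define s where "s = (Y*u) mod M"
    define q where "q = (Y*u) div M"
    have hs: "s = Y*u - M * q" unfolding s_def q_def by (simp add: minus_div_mult_eq_mod[symmetric] algebra_simps)
    have h1: "1 - u*m = v*M" using uv by linarith
    have "Y - s*m = Y*(1 - u*m) + M*q*m" unfolding hs by (simp add: algebra_simps)
    also have "\<dots> = M * (Y*v + q*m)" unfolding h1 by (simp add: algebra_simps)
    finally have d1: "M dvd Y - s*m" by (rule dvdI)
    have "m^2 * (s^2 + D) = (s*m - Y) * (s*m + Y) + (D*m^2 + Y^2)"
      by (simp add: power2_eq_square algebra_simps)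
    hence "m^2 * (s^2 + D) = (s*m - Y) * (s*m + Y) + M" unfolding eq .
    moreover have "M dvd (s*m - Y) * (s*m + Y)"
    proof -
      have "M dvd s*m - Y" using d1 by (metis dvd_minus_iff minus_diff_eq)
      thus ?thesis by simp
    qed
    ultimately have "M dvd m^2 * (s^2 + D)" by simp
    moreover have "coprime M (m^2)" using copM by (simp add: coprime_commute)
    ultimately have "M dvd s^2 + D" by (simp add: coprime_dvd_mult_right_iff)
    moreover have "0 \<le> s" "s < M" using M unfolding s_def by auto
    ultimately have "s \<in> Rt D M" unfolding Rt_def by auto
    moreover have "p \<in> G s" using p pm d1 unfolding G_def by auto
    ultimately show "p \<in> (\<Union>s\<in>Rt D M. G s)" by blast
  qed
  have fib: "card (G s) \<le> 2" for s
  proof (cases "G s = {}")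
    case True then show ?thesis by simp
  next
    case False
    then obtain m1 Y1 where p1: "(m1,Y1) \<in> G s" by auto
    have "G s \<subseteq> {(m1,Y1), (-m1,-Y1)}"
    proof
      fix p assume "p \<in> G s"
      then obtain m2 Y2 where p: "p = (m2,Y2)" "(m2,Y2) \<in> G s" by (cases p) auto
      have e1: "D*m1^2 + Y1^2 = M" "coprime m1 Y1" "M dvd Y1 - s*m1" using p1 unfolding G_def Prim_def by auto
      have e2: "D*m2^2 + Y2^2 = M" "coprime m2 Y2" "M dvd Y2 - s*m2" using p(2) unfolding G_def Prim_def by auto
      define t where "t = m1*Y2 - m2*Y1"
      have "t = m1*(Y2 - s*m2) - m2*(Y1 - s*m1)" unfolding t_def by (simp add: algebra_simps)
      hence Mt: "M dvd t" using e1(3) e2(3) by (simp add: dvd_diff)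
      have "(D*m1^2 + Y1^2) * (D*m2^2 + Y2^2) = (D*m1*m2 + Y1*Y2)^2 + D * t^2"
        unfolding t_def by (simp add: power2_eq_square algebra_simps)
      hence lag: "M * M = (D*m1*m2 + Y1*Y2)^2 + D * t^2" using e1(1) e2(1) by simp
      have "t = 0"
      proof (rule ccontr)
        assume "t \<noteq> 0"
        then have "\<bar>t\<bar> \<ge> M" using Mt M by (simp add: zdvd_imp_le dvd_abs_iff)
        hence "\<bar>M\<bar> \<le> \<bar>t\<bar>" using M by simp
        hence "M^2 \<le> t^2" by (simp add: abs_le_square_iff)
        hence "2 * M^2 \<le> D * t^2" using D by (intro mult_mono) auto
        moreover have "M^2 > 0" using M by simp
        moreover have "(D*m1*m2 + Y1*Y2)^2 \<ge> 0" by simp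
        moreover have "M * M = M^2" by (simp add: power2_eq_square)
        ultimately show False using lag by linarith
      qed
      hence "m1 * Y2 = m2 * Y1" unfolding t_def by simp
      thus "p \<in> {(m1,Y1), (-m1,-Y1)}" using pm_lemma[OF e1(2) e2(2)] p by auto
    qed
    hence "card (G s) \<le> card {(m1,Y1), (-m1,-Y1)}" by (intro card_mono) auto
    also have "\<dots> \<le> 2" by (simp add: card_insert_if)
    finally show ?thesis .
  qed
  have "card (Prim D M) \<le> card (\<Union>s\<in>Rt D M. G s)"
  proof (rule card_mono[OF _ cover])
    have "G s \<subseteq> Prim D M" for s by (auto simp: G_def)
    hence "finite (G s)" for s using prim_finite[of D M] D by (meson finite_subset one_le_numeral order_trans)
    thus "finite (\<Union>s\<in>Rt D M. G s)" using finRt by blast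
  qed
  also have "\<dots> \<le> (\<Sum>s\<in>Rt D M. card (G s))" by (rule card_UN_le[OF finRt])
  also have "\<dots> \<le> (\<Sum>s\<in>Rt D M. 2)" by (rule sum_mono) (rule fib)
  finally show ?thesis by (simp add: mult.commute)
qed


definition Esol :: "int \<Rightarrow> int \<Rightarrow> (int \<times> int) set" where
  "Esol D N = {(m,Y). m \<noteq> 0 \<and> D*m^2 + Y^2 = N}"

definition dc :: "int \<Rightarrow> nat" where
  "dc N = card {d::int. d > 0 \<and> d dvd N}"

lemma fin_divs: "N > 0 \<Longrightarrow> finite {d::int. d > 0 \<and> d dvd N}"
  by (rule finite_subset[of _ "{0..N}"]) (auto simp: zdvd_imp_le)

lemma dc_mono: "0 < M \<Longrightarrow> M dvd N \<Longrightarrow> N > 0 \<Longrightarrow> dc M \<le> dc N"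
  unfolding dc_def by (intro card_mono fin_divs) (auto intro: dvd_trans)

lemma prim_bound2:
  assumes "D \<ge> 2" "M > 0"
  shows "int (card (Prim D M)) \<le> 8 * D * int (dc M)"
proof -
  have "int (card (Prim D M)) \<le> 2 * int (card (Rt D M))" using prim_bound[OF assms] by linarith
  also have "\<dots> \<le> 2 * (4 * D * int (dc M))" using roots_bound[of D M] assms unfolding dc_def by simp
  finally show ?thesis by simp
qed

lemma Esol_finite:
  assumes "D \<ge> 1" shows "finite (Esol D N)"
proof (rule finite_subset)
  show "Esol D N \<subseteq> {-\<bar>N\<bar>..\<bar>N\<bar>} \<times> {-\<bar>N\<bar>..\<bar>N\<bar>}"
  proof
    fix p assume "p \<in> Esol D N"
    then obtain m Y where p: "p = (m,Y)" "D*m^2 + Y^2 = N" unfolding Esol_def by auto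
    have "m^2 \<le> D*m^2" using assms by (simp add: mult_le_cancel_right1)
    moreover have "Y^2 \<ge> 0" by simp
    ultimately have "m^2 \<le> N" using p by linarith
    hence "\<bar>m\<bar> \<le> \<bar>N\<bar>" using abs_le_sq_int[of m] by linarith
    moreover have "D*m^2 \<ge> 0" using assms by simp
    hence "Y^2 \<le> N" using p by linarith
    hence "\<bar>Y\<bar> \<le> \<bar>N\<bar>" using abs_le_sq_int[of Y] by linarith
    ultimately show "p \<in> {-\<bar>N\<bar>..\<bar>N\<bar>} \<times> {-\<bar>N\<bar>..\<bar>N\<bar>}" using p by auto
  qed
qed auto

lemma E_count:
  assumes D: "D \<ge> 2" and N: "N > 0"
  shows "int (card (Esol D N)) \<le> 8 * D * int (dc N)^2"
proof -
  define G where "G = {g::int. g > 0 \<and> g^2 dvd N}"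
  define T where "T = Sigma G (\<lambda>g. Prim D (N div g^2))"
  define f :: "int \<times> int \<times> int \<Rightarrow> int \<times> int" where "f = (\<lambda>(g,u,v). (g*u, g*v))"
  have GD: "G \<subseteq> {d. d > 0 \<and> d dvd N}" unfolding G_def
    by (auto intro: dvd_trans[of _ "_^2"] simp: power2_eq_square)
  have finG: "finite G" using finite_subset[OF GD fin_divs[OF N]] .
  have cardG: "card G \<le> dc N" unfolding dc_def by (rule card_mono[OF fin_divs[OF N] GD])
  have finT: "finite T" unfolding T_def using finG prim_finite[of D] D by (intro finite_SigmaI) auto
  have cover: "Esol D N \<subseteq> f ` T"
  proof
    fix p assume "p \<in> Esol D N"
    then obtain m Y where p: "p = (m,Y)" and m0: "m \<noteq> 0" and eq: "D*m^2 + Y^2 = N"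
      unfolding Esol_def by auto
    define g where "g = gcd m Y"
    have g0: "g > 0" using m0 by (simp add: g_def)
    define u where "u = m div g"
    define v where "v = Y div g"
    have mu: "m = g*u" unfolding u_def g_def by simp
    have Yv: "Y = g*v" unfolding v_def g_def by simp
    have cop: "coprime u v" unfolding u_def v_def g_def using div_gcd_coprime m0 by blast
    have Neq: "N = g^2 * (D*u^2 + v^2)" using eq mu Yv by (simp add: power2_eq_square algebra_simps)
    hence "g^2 dvd N" by simp
    hence "g \<in> G" using g0 unfolding G_def by simp
    moreover have "N div g^2 = D*u^2 + v^2" using Neq g0 by simp
    hence "(u,v) \<in> Prim D (N div g^2)" using cop unfolding Prim_def by simp
    ultimately have "(g,(u,v)) \<in> T" unfolding T_def by simp
    moreover have "p = f (g,(u,v))" unfolding f_def using p mu Yv by simp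
    ultimately show "p \<in> f ` T" by blast
  qed
  have "card (Esol D N) \<le> card (f ` T)" by (rule card_mono[OF _ cover]) (use finT in simp)
  also have "\<dots> \<le> card T" by (rule card_image_le[OF finT])
  finally have c1: "int (card (Esol D N)) \<le> int (card T)" by simp
  have "int (card T) = (\<Sum>g\<in>G. int (card (Prim D (N div g^2))))"
    unfolding T_def using finG prim_finite[of D] D by (simp add: card_SigmaI)
  also have "\<dots> \<le> (\<Sum>g\<in>G. 8 * D * int (dc N))"
  proof (rule sum_mono)
    fix g assume g: "g \<in> G"
    hence gp: "g > 0" and gd: "g^2 dvd N" unfolding G_def by auto
    obtain q where Nq: "N = g^2 * q" using gd by (elim dvdE)
    have g2: "g^2 > 0" using gp by simp
    have Ndq: "N div g^2 = q" using Nq g2 by simp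
    have Mpos: "N div g^2 > 0" using Nq g2 N Ndq by (simp add: zero_less_mult_iff)
    have Mdvd: "N div g^2 dvd N" using Nq Ndq by simp
    have "int (card (Prim D (N div g^2))) \<le> 8 * D * int (dc (N div g^2))"
      by (rule prim_bound2[OF D Mpos])
    also have "dc (N div g^2) \<le> dc N" by (rule dc_mono[OF Mpos Mdvd N])
    hence "8 * D * int (dc (N div g^2)) \<le> 8 * D * int (dc N)" using D by simp
    finally show "int (card (Prim D (N div g^2))) \<le> 8 * D * int (dc N)" .
  qed
  also have "\<dots> = int (card G) * (8 * D * int (dc N))" by simp
  also have "\<dots> \<le> int (dc N) * (8 * D * int (dc N))" using cardG D by (intro mult_right_mono) auto
  finally show ?thesis using c1 by (simp add: power2_eq_square algebra_simps)
qed

lemma small_count: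
  fixes D N :: int
  assumes D: "D \<ge> 1" and N: "N > 0"
  shows "card {p \<in> Esol D N. (fst p)^4 \<le> N} \<le> 4 * nat (D + 1)"
proof -
  define r where "r = sqrt (real_of_int N)"
  define F where "F = \<lfloor>r\<rfloor>"
  have r0: "r \<ge> 0" unfolding r_def using N by simp
  have rr: "r^2 = real_of_int N" unfolding r_def by (rule real_sqrt_pow2) (use N in simp)
  define S where "S = {p \<in> Esol D N. (fst p)^4 \<le> N}"
  define Ys where "Ys = {y::int. F - D \<le> \<bar>y\<bar> \<and> \<bar>y\<bar> \<le> F}"
  define h :: "int \<times> int \<Rightarrow> int \<times> bool" where "h = (\<lambda>(m,Y). (Y, m > 0))"
  have inS: "\<bar>Y\<bar> \<le> F \<and> F - D \<le> \<bar>Y\<bar>" if "(m,Y) \<in> S" for m Y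
  proof -
    have eq: "D*m^2 + Y^2 = N" and m4: "m^4 \<le> N" using that unfolding S_def Esol_def by auto
    have Dm: "D*m^2 \<ge> 0" using D by simp
    have "real_of_int \<bar>Y\<bar> ^2 \<le> r^2" using eq Dm rr by (simp add: power2_abs)
    hence Yr: "real_of_int \<bar>Y\<bar> \<le> r" using r0 by (simp add: power2_le_iff_abs_le)
    hence "\<bar>Y\<bar> \<le> F" unfolding F_def by (simp add: le_floor_iff)
    moreover have "real_of_int F - real_of_int D \<le> real_of_int \<bar>Y\<bar>"
    proof -
      have "(real_of_int (m^2))^2 \<le> r^2" using m4 rr by (simp add: power_mult[symmetric]) 
      hence m2: "real_of_int (m^2) \<le> r" using r0 by (rule power2_le_imp_le)
      have Y2: "real_of_int \<bar>Y\<bar>^2 = r^2 - real_of_int D * real_of_int (m^2)"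
        using eq rr by (simp add: power2_abs) (smt (verit) of_int_add of_int_mult of_int_power)
      have "r - real_of_int D \<le> real_of_int \<bar>Y\<bar>"
      proof (cases "r \<le> real_of_int D")
        case True then show ?thesis by simp
      next
        case False
        have "real_of_int D * real_of_int (m^2) \<le> real_of_int D * r" using m2 D by (intro mult_left_mono) auto
        moreover have "real_of_int D * real_of_int D \<le> real_of_int D * r" using False D by (intro mult_left_mono) auto
        ultimately have "(r - real_of_int D)^2 \<le> real_of_int \<bar>Y\<bar>^2"
          using Y2 by (simp add: power2_eq_square algebra_simps)
        moreover have "real_of_int \<bar>Y\<bar> \<ge> 0" by simp
        ultimately show ?thesis by (rule power2_le_imp_le)
      qed
      moreover have "real_of_int F \<le> r" unfolding F_def by simp
      ultimately show ?thesis by linarith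
    qed
    hence "F - D \<le> \<bar>Y\<bar>" by linarith
    ultimately show ?thesis by simp
  qed
  have inj: "inj_on h S"
  proof (rule inj_onI)
    fix p q assume p: "p \<in> S" and q: "q \<in> S" and hpq: "h p = h q"
    obtain m1 Y1 where p1: "p = (m1,Y1)" by (cases p)
    obtain m2 Y2 where q1: "q = (m2,Y2)" by (cases q)
    have e1: "D*m1^2 + Y1^2 = N" "m1 \<noteq> 0" using p p1 unfolding S_def Esol_def by auto
    have e2: "D*m2^2 + Y2^2 = N" "m2 \<noteq> 0" using q q1 unfolding S_def Esol_def by auto
    have Y: "Y1 = Y2" and sg: "(m1 > 0) = (m2 > 0)" using hpq p1 q1 unfolding h_def by auto
    have "D*m1^2 + Y2^2 = N" using e1(1) Y by simp
    hence "D*m1^2 = D*m2^2" using e2(1) by linarith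
    hence "m1^2 = m2^2" using D by simp
    hence "m1 = m2 \<or> m1 = -m2" by (simp add: power2_eq_iff)
    hence "m1 = m2" using sg e1(2) e2(2) by auto
    thus "p = q" using p1 q1 Y by simp
  qed
  have hS: "h ` S \<subseteq> Ys \<times> UNIV" unfolding h_def Ys_def using inS by auto
  have Ysub: "Ys \<subseteq> {-F..-F+D} \<union> {F-D..F}"
  proof
    fix y assume "y \<in> Ys"
    hence y: "F - D \<le> \<bar>y\<bar>" "\<bar>y\<bar> \<le> F" unfolding Ys_def by auto
    show "y \<in> {-F..-F+D} \<union> {F-D..F}"
    proof (cases "y \<ge> 0")
      case True then show ?thesis using y by simp
    next
      case False then show ?thesis using y by simp
    qed
  qed
  have cY: "card Ys \<le> 2 * nat (D + 1)"
  proof -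
    have "card Ys \<le> card ({-F..-F+D} \<union> {F-D..F})" by (rule card_mono[OF _ Ysub]) auto
    also have "\<dots> \<le> card {-F..-F+D} + card {F-D..F}" by (rule card_Un_le)
    finally show ?thesis by simp
  qed
  have finYs: "finite Ys" using Ysub by (meson finite_Un finite_atLeastAtMost_int finite_subset)
  have "card S = card (h ` S)" using inj by (simp add: card_image)
  also have "\<dots> \<le> card (Ys \<times> (UNIV :: bool set))" by (rule card_mono[OF _ hS]) (use finYs in simp)
  also have "\<dots> = card Ys * 2" by (simp add: card_cartesian_product)
  finally show ?thesis using cY unfolding S_def by simp
qed


lemma key_bound:
  fixes D :: int and lam :: real
  assumes D: "D \<ge> 2" and lam: "lam > 0"
  shows "\<exists>C. \<forall>N. finite (Esol D N) \<and> (\<Sum>(m,Y)\<in>Esol D N. 1/(real_of_int \<bar>m\<bar> powr lam)) \<le> C"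
proof -
  obtain Cd where Cd: "Cd \<ge> 1"
    "\<And>N::int. N > 0 \<Longrightarrow> real (card {d. d > 0 \<and> d dvd N}) \<le> Cd * real_of_int N powr (lam/8)"
    using int_divisor_bound[of "lam/8"] lam by auto
  define C where "C = 4 * real_of_int (D+1) + 8 * real_of_int D * Cd^2"
  have C0: "C \<ge> 0" unfolding C_def using D by simp
  show ?thesis
  proof (intro exI[of _ C] allI conjI)
    fix N
    show "finite (Esol D N)" using Esol_finite D by simp
    show "(\<Sum>(m,Y)\<in>Esol D N. 1/(real_of_int \<bar>m\<bar> powr lam)) \<le> C"
    proof (cases "N > 0")
      case False
      have "Esol D N = {}"
      proof (rule ccontr)
        assume "Esol D N \<noteq> {}"
        then obtain m Y where "m \<noteq> 0" "D*m^2 + Y^2 = N" unfolding Esol_def by auto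
        moreover have "D*m^2 > 0" using D \<open>m \<noteq> 0\<close> by simp
        moreover have "Y^2 \<ge> 0" by simp
        ultimately show False using False by linarith
      qed
      thus ?thesis using C0 by simp
    next
      case True
      define E where "E = Esol D N"
      have finE: "finite E" unfolding E_def using Esol_finite D by simp
      define w where "w = (\<lambda>p::int\<times>int. 1/(real_of_int \<bar>fst p\<bar> powr lam))"
      have sum_eq: "(\<Sum>(m,Y)\<in>E. 1/(real_of_int \<bar>m\<bar> powr lam)) = (\<Sum>p\<in>E. w p)"
        by (simp add: w_def case_prod_beta)
      define Q where "Q = real_of_int N powr (lam/4)"
      have Q0: "Q > 0" unfolding Q_def using True by simp
      have pw: "w p \<le> (if (fst p)^4 \<le> N then 1 else 0) + 1/Q" if p: "p \<in> E" for p
      proof -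
        obtain m Y where pm: "p = (m,Y)" by (cases p)
        have m0: "m \<noteq> 0" using p pm unfolding E_def Esol_def by auto
        have m1: "real_of_int \<bar>m\<bar> \<ge> 1" using m0 by simp
        hence pl: "real_of_int \<bar>m\<bar> powr lam \<ge> 1" using lam by (simp add: ge_one_powr_ge_zero)
        have w1: "w p \<le> 1" using pl pm unfolding w_def by (auto simp: divide_le_eq)
        have w0: "w p \<ge> 0" unfolding w_def by simp
        show ?thesis
        proof (cases "m^4 \<le> N")
          case True
          have "1/Q > 0" using Q0 by simp
          hence "w p \<le> 1 + 1/Q" using w1 by linarith
          thus ?thesis using True pm by simp
        next
          case False
          have "real_of_int \<bar>m\<bar> powr lam = (real_of_int \<bar>m\<bar> powr 4) powr (lam/4)"
            by (simp only: powr_powr) simp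
          also have "real_of_int \<bar>m\<bar> powr 4 = real_of_int (m^4)"
            using m1 by (simp add: powr_realpow power_even_abs_numeral)
          also have "real_of_int (m^4) powr (lam/4) \<ge> Q"
            unfolding Q_def using False True lam by (intro powr_mono2) auto
          finally have "real_of_int \<bar>m\<bar> powr lam \<ge> Q" .
          hence "w p \<le> 1/Q" unfolding w_def using Q0 pm by (simp add: frac_le)
          then show ?thesis using False pm by simp
        qed
      qed
      have "(\<Sum>p\<in>E. w p) \<le> (\<Sum>p\<in>E. (if (fst p)^4 \<le> N then 1 else 0) + 1/Q)"
        by (rule sum_mono) (rule pw)
      also have "\<dots> = real (card {p \<in> E. (fst p)^4 \<le> N}) + real (card E) / Q"
        by (simp add: sum.distrib sum.inter_filter[OF finE, symmetric])
      also have "real (card {p \<in> E. (fst p)^4 \<le> N}) \<le> 4 * real_of_int (D+1)"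
      proof -
        have "card {p \<in> E. (fst p)^4 \<le> N} \<le> 4 * nat (D + 1)"
          unfolding E_def using small_count[of D N] D True by simp
        hence "real (card {p \<in> E. (fst p)^4 \<le> N}) \<le> real (4 * nat (D + 1))" by linarith
        thus ?thesis using D by simp
      qed
      also have "real (card E) / Q \<le> 8 * real_of_int D * Cd^2"
      proof -
        have dcN: "real (dc N) \<le> Cd * real_of_int N powr (lam/8)" unfolding dc_def using Cd(2)[OF True] .
        have "real (dc N)^2 \<le> (Cd * real_of_int N powr (lam/8))^2"
          using dcN by (intro power_mono) auto
        also have "\<dots> = Cd^2 * Q"
          unfolding Q_def by (simp add: power_mult_distrib power2_eq_square powr_add[symmetric])
        finally have d2: "real (dc N)^2 \<le> Cd^2 * Q" .
        have "int (card E) \<le> 8 * D * int (dc N)^2" unfolding E_def by (rule E_count[OF D True])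
        hence "real_of_int (int (card E)) \<le> real_of_int (8 * D * int (dc N)^2)" by (simp only: of_int_le_iff)
        hence "real (card E) \<le> 8 * real_of_int D * real (dc N)^2" by simp
        also have "\<dots> \<le> 8 * real_of_int D * (Cd^2 * Q)" using d2 D by (intro mult_left_mono) auto
        finally have "real (card E) \<le> (8 * real_of_int D * Cd^2) * Q" by (simp add: algebra_simps)
        thus ?thesis using Q0 by (simp add: divide_le_eq)
      qed
      finally have fin: "(\<Sum>p\<in>E. w p) \<le> 4 * real_of_int (D+1) + 8 * real_of_int D * Cd^2" by simp
      show ?thesis using sum_eq fin unfolding C_def E_def by linarith
    qed
  qed
qed

lemma disc_ne: "(b::int)^2 - 4*a*c \<noteq> -1"
proof
  assume h: "b^2 - 4*a*c = -1"
  have X: "\<forall>X Y::int. 4*X + 1 \<noteq> 4*Y" by presburger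
  have Z: "\<forall>X Y::int. 4*X + 2 \<noteq> 4*Y" by presburger
  have ac: "4*a*c = 4*(a*c)" by simp
  show False
  proof (cases "even b")
    case True
    then obtain t where "b = 2*t" by auto
    hence "b^2 = 4*(t*t)" by (simp add: power2_eq_square)
    hence "4*(t*t) + 1 = 4*(a*c)" using h ac by linarith
    thus False using X by blast
  next
    case False
    then obtain t where "b = 2*t + 1" using oddE by blast
    hence "b^2 = 4*(t*t + t) + 1" by (simp add: power2_eq_square algebra_simps)
    hence "4*(t*t + t) + 2 = 4*(a*c)" using h ac by linarith
    thus False using Z by blast
  qed
qed

theorem mainTheorem6:
  fixes lam :: real and \<Delta> :: int
  assumes "lam > 0" and "\<Delta> < 0"
  shows "\<exists>C::real. \<forall>a b c k :: int. a > 0 \<and> b^2 - 4*a*c = \<Delta> \<longrightarrow>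
           finite (repset a b c k) \<and>
           (\<Sum>(m, n)\<in>repset a b c k. 1 / (real_of_int \<bar>m\<bar> powr lam)) \<le> C"
proof (cases "\<Delta> = -1")
  case True
  show ?thesis by (rule exI[of _ 0]) (use disc_ne True in auto)
next
  case False
  define D where "D = -\<Delta>"
  have D2: "D \<ge> 2" using assms(2) False unfolding D_def by linarith
  obtain C where C: "\<And>N. finite (Esol D N) \<and> (\<Sum>(m,Y)\<in>Esol D N. 1/(real_of_int \<bar>m\<bar> powr lam)) \<le> C"
    using key_bound[OF D2 assms(1)] by blast
  show ?thesis
  proof (rule exI[of _ C], intro allI impI)
    fix a b c k :: int assume h: "a > 0 \<and> b^2 - 4*a*c = \<Delta>"
    define A where "A = repset a b c k"
    define \<phi> :: "int \<times> int \<Rightarrow> int \<times> int" where "\<phi> = (\<lambda>(m,n). (m, 2*c*n + b*m))"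
    have "4*a*c = b^2 + D" using h unfolding D_def by simp
    moreover have "b^2 \<ge> 0" by simp
    ultimately have "4*a*c > 0" using D2 by linarith
    hence "a * c > 0" by (simp add: mult.assoc)
    hence c0: "c > 0" using h by (simp add: zero_less_mult_iff)
    have inj: "inj_on \<phi> A"
    proof (rule inj_onI)
      fix p q assume "p \<in> A" "q \<in> A" "\<phi> p = \<phi> q"
      obtain m1 n1 where p: "p = (m1,n1)" by (cases p)
      obtain m2 n2 where q: "q = (m2,n2)" by (cases q)
      have "m1 = m2" "2*c*n1 + b*m1 = 2*c*n2 + b*m2" using \<open>\<phi> p = \<phi> q\<close> p q unfolding \<phi>_def by auto
      hence "c * n1 = c * n2" by simp
      hence "n1 = n2" using c0 by simp
      thus "p = q" using p q \<open>m1 = m2\<close> by simp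
    qed
    have img: "\<phi> ` A \<subseteq> Esol D (4*c*k)"
    proof
      fix x assume "x \<in> \<phi> ` A"
      then obtain m n where mn: "(m,n) \<in> A" "x = \<phi> (m,n)" by auto
      have m0: "m \<noteq> 0" and q: "a*m^2 + b*m*n + c*n^2 = k"
        using mn(1) unfolding A_def repset_def qform_def by auto
      have Dv: "D = 4*a*c - b^2" using h unfolding D_def by simp
      have "D*m^2 + (2*c*n + b*m)^2 = 4*c*(a*m^2 + b*m*n + c*n^2)"
        unfolding Dv by (simp add: power2_eq_square algebra_simps)
      hence "D*m^2 + (2*c*n + b*m)^2 = 4*c*k" using q by simp
      thus "x \<in> Esol D (4*c*k)" using mn(2) m0 unfolding \<phi>_def Esol_def by simp
    qed
    have finE: "finite (Esol D (4*c*k))" using C by blast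
    have finA: "finite A" using finite_imageD[OF finite_subset[OF img finE] inj] .
    have "(\<Sum>(m, n)\<in>A. 1 / (real_of_int \<bar>m\<bar> powr lam)) = (\<Sum>(m,Y)\<in>\<phi> ` A. 1 / (real_of_int \<bar>m\<bar> powr lam))"
      by (rule sum.reindex_cong[OF inj refl, symmetric]) (auto simp: \<phi>_def)
    also have "\<dots> \<le> (\<Sum>(m,Y)\<in>Esol D (4*c*k). 1 / (real_of_int \<bar>m\<bar> powr lam))"
      by (rule sum_mono2[OF finE img]) auto
    also have "\<dots> \<le> C" using C by blast
    finally show "finite (repset a b c k) \<and> (\<Sum>(m, n)\<in>repset a b c k. 1 / (real_of_int \<bar>m\<bar> powr lam)) \<le> C"
      using finA unfolding A_def by simp
  qed
qed


end
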